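(* There is a constant $C=C(n,m,\alpha)>0$ such that for all $x,y\in\mathbb{R}^n_+$, $x\neq y$, $$G_{2t}^+(x,y)\le\frac{C}{|x-y|^{n-2t}}.$$
   Context: $n\ge2$, $m\in\mathbb{N}$, $2m<n$, $0<\alpha<2$, $t=m+\alpha/2<n/2$. $\mathbb{R}^n_+=\{x: x_n>0\}$. $G_{2m}^+(x,y)=c_{n,m}(|x-y|^{2m-n}-|x^*-y|^{2m-n})$, $x^*=(x',-x_n)$; $G_\alpha^+(x,y)=\frac{A_{n,\alpha}}{s^{(n-\alpha)/2}}\Big[1-\frac{B_{n,\alpha}}{(s+\tau)^{(n-2)/2}}\int_0^{s/\tau}\frac{(s-\tau b)^{(n-2)/2}}{b^{\alpha/2}(1+b)}db\Big]$ with $s=|x-y|^2$, $\tau=4x_ny_n$ (Green's function of $(-\Delta)^{\alpha/2}$ on $\mathbb{R}^n_+$); $G_{2t}^+(x,y)=\int_{\mathbb{R}^n_+}G_{2m}^+(x,z)G_\alpha^+(z,y)dz$. *)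

theory Defs
  imports "HOL-Analysis.Analysis"
begin

text \<open>Ambient space R^n is real^'n (n = CARD('n)); the half space is
  {x. x $ k > 0} for a distinguished coordinate k (playing the role of x_n).\<close>

definition half_space :: "'n::finite \<Rightarrow> (real^'n) set" where
  "half_space k = {x. x $ k > 0}"

definition refl_pt :: "'n::finite \<Rightarrow> real^'n \<Rightarrow> real^'n" where
  "refl_pt k x = (\<chi> i. if i = k then - (x $ i) else x $ i)"

definition c_const :: "real \<Rightarrow> nat \<Rightarrow> real" where
  "c_const n m = Gamma (n/2 - real m) / (4 ^ m * pi powr (n/2) * Gamma (real m))"

definition A_const :: "real \<Rightarrow> real \<Rightarrow> real" where
  "A_const n \<alpha> = Gamma ((n - \<alpha>)/2) / (2 powr \<alpha> * pi powr (n/2) * Gamma (\<alpha>/2))"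

definition B_const :: "real \<Rightarrow> real \<Rightarrow> real" where
  "B_const n \<alpha> = sin (pi * \<alpha> / 2) / pi"

definition G2m_half :: "'n::finite \<Rightarrow> nat \<Rightarrow> real^'n \<Rightarrow> real^'n \<Rightarrow> real" where
  "G2m_half k m x y =
     c_const (real CARD('n)) m *
       (dist x y powr (2 * real m - real CARD('n))
        - dist (refl_pt k x) y powr (2 * real m - real CARD('n)))"

definition Galpha_half :: "'n::finite \<Rightarrow> real \<Rightarrow> real^'n \<Rightarrow> real^'n \<Rightarrow> real" where
  "Galpha_half k \<alpha> x y =
     (let n = real CARD('n); s = (dist x y)\<^sup>2; \<tau> = 4 * (x $ k) * (y $ k) in
      A_const n \<alpha> / s powr ((n - \<alpha>) / 2) *
      (1 - B_const n \<alpha> / (s + \<tau>) powr ((n - 2) / 2) *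
         (LBINT b=0..s/\<tau>. (s - \<tau> * b) powr ((n - 2) / 2) / (b powr (\<alpha>/2) * (1 + b)))))"

definition G2t_half :: "'n::finite \<Rightarrow> nat \<Rightarrow> real \<Rightarrow> real^'n \<Rightarrow> real^'n \<Rightarrow> real" where
  "G2t_half k m \<alpha> x y =
     set_lebesgue_integral lborel (half_space k) (\<lambda>z. G2m_half k m x z * Galpha_half k \<alpha> z y)"

end

theory Submission
  imports Defs
begin

lemma L1:
  fixes c :: "'a::euclidean_space" and R e :: real
  assumes R: "R > 0" and e: "e < 0" and ne: "real DIM('a) + e > 0"
  shows "(\<integral>\<^sup>+z. ennreal (indicator (cball c R) z * dist z c powr e) \<partial>lborel)
     \<le> ennreal (unit_ball_vol DIM('a) * R powr (real DIM('a) + e) * 2 powr (-e) / (1 - 2 powr (-(real DIM('a) + e))))"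
proof -
  define N where "N = real DIM('a)"
  define \<rho> where "\<rho> j = R * 2 powr (- real j)" for j :: nat
  define w where "w j = (R * 2 powr (- real j - 1)) powr e" for j :: nat
  define V where "V = unit_ball_vol DIM('a)"
  define q where "q = 2 powr (-(N + e))"
  define K where "K = V * R powr (N + e) * 2 powr (-e)"
  have V: "V > 0" unfolding V_def by simp
  have q: "0 < q" "q < 1" using ne unfolding q_def N_def by (auto intro: powr_less_one)
  have rho: "\<rho> j > 0" for j using R by (simp add: \<rho>_def)
  have pw: "ennreal (indicator (cball c R) z * dist z c powr e)
      \<le> (\<Sum>j. ennreal (w j) * indicator (cball c (\<rho> j)) z)" for z
  proof (cases "z \<in> cball c R \<and> z \<noteq> c")
    case False
    then show ?thesis by auto
  next
    case True
    define d where "d = dist z c"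
    have d: "0 < d" "d \<le> R" using True by (auto simp: d_def dist_commute)
    define L where "L = log 2 (R / d)"
    have L0: "L \<ge> 0" using d unfolding L_def by simp
    define J where "J = nat \<lfloor>L\<rfloor>"
    have J1: "real J \<le> L" "L < real J + 1" using L0 unfolding J_def by linarith+
    have "2 powr real J \<le> R / d" using J1(1) d unfolding L_def
      using le_log_iff[of 2 "R/d" "real J"] R by simp
    hence dJ: "d \<le> \<rho> J" using d unfolding \<rho>_def by (simp add: powr_minus field_simps)
    have "R / d < 2 powr (real J + 1)" using J1(2) d R unfolding L_def
      by (simp add: log_less_iff)
    hence dJ2: "R * 2 powr (- real J - 1) < d" using d
      by (simp add: powr_minus field_simps powr_diff powr_add)
    have "d powr e \<le> w J" unfolding w_def
      by (rule powr_mono2') (use e dJ2 R in auto)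
    hence "ennreal (indicator (cball c R) z * dist z c powr e) \<le> ennreal (w J) * indicator (cball c (\<rho> J)) z"
      using True dJ by (auto simp: d_def dist_commute intro: ennreal_leI)
    also have "\<dots> \<le> (\<Sum>j. ennreal (w j) * indicator (cball c (\<rho> j)) z)"
      using ennreal_suminf_lessD linorder_not_less by blast
    finally show ?thesis .
  qed
  have "(\<integral>\<^sup>+z. ennreal (indicator (cball c R) z * dist z c powr e) \<partial>lborel)
      \<le> (\<integral>\<^sup>+z. (\<Sum>j. ennreal (w j) * indicator (cball c (\<rho> j)) z) \<partial>lborel)"
    by (rule nn_integral_mono) (rule pw)
  also have "\<dots> = (\<Sum>j. \<integral>\<^sup>+z. ennreal (w j) * indicator (cball c (\<rho> j)) z \<partial>lborel)"
    by (rule nn_integral_suminf) (measurable, auto simp: pred_def)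
  also have "\<dots> = (\<Sum>j. ennreal (w j * (V * \<rho> j ^ DIM('a))))"
    using rho by (simp add: nn_integral_cmult_indicator emeasure_cball V_def less_imp_le ennreal_mult w_def)
  also have "\<dots> = (\<Sum>j. ennreal (K * q ^ j))"
  proof -
    have "w j * (V * \<rho> j ^ DIM('a)) = K * q ^ j" for j
    proof -
      have "\<rho> j ^ DIM('a) = \<rho> j powr N" using rho by (simp add: N_def powr_realpow)
      also have "\<dots> = R powr N * 2 powr (- real j * N)" using R
        by (simp add: \<rho>_def powr_mult powr_powr)
      finally have a: "\<rho> j ^ DIM('a) = R powr N * 2 powr (- real j * N)" .
      have b: "w j = R powr e * 2 powr ((- real j - 1) * e)" using R
        by (simp add: w_def powr_mult powr_powr)
      have c: "q ^ j = 2 powr (- real j * (N + e))" unfolding q_def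
        by (simp add: powr_realpow[symmetric] powr_powr mult.commute algebra_simps)
      show ?thesis unfolding a b c K_def
        by (simp add: powr_add algebra_simps) (simp add: powr_add[symmetric] algebra_simps, rule disjI2, rule disjI2, rule arg_cong[where f="\<lambda>t. 2 powr t"], simp)
    qed
    then show ?thesis by simp
  qed
  also have "\<dots> = ennreal (K / (1 - q))"
    apply (rule suminf_ennreal_eq)
    using q V R apply (simp add: K_def)
    using sums_mult[OF geometric_sums[of q], of K] q by simp
  finally show ?thesis by (simp add: K_def V_def N_def q_def)
qed


lemma L2:
  fixes c :: "'a::euclidean_space" and R e :: real
  assumes R: "R > 0" and ne: "real DIM('a) + e < 0"
  shows "(\<integral>\<^sup>+z. ennreal (indicator (- cball c R) z * dist z c powr e) \<partial>lborel)
     \<le> ennreal (unit_ball_vol DIM('a) * R powr (real DIM('a) + e) * 2 powr (real DIM('a)) / (1 - 2 powr (real DIM('a) + e)))"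
proof -
  define N where "N = real DIM('a)"
  define \<rho> where "\<rho> j = R * 2 powr (real j + 1)" for j :: nat
  define w where "w j = (R * 2 powr (real j)) powr e" for j :: nat
  define V where "V = unit_ball_vol DIM('a)"
  define q where "q = 2 powr (N + e)"
  define K where "K = V * R powr (N + e) * 2 powr N"
  have V: "V > 0" unfolding V_def by simp
  have q: "0 < q" "q < 1" using ne unfolding q_def N_def by (auto intro: powr_less_one)
  have rho: "\<rho> j > 0" for j using R by (simp add: \<rho>_def)
  have pw: "ennreal (indicator (- cball c R) z * dist z c powr e)
      \<le> (\<Sum>j. ennreal (w j) * indicator (cball c (\<rho> j)) z)" for z
  proof (cases "z \<notin> cball c R")
    case False
    then show ?thesis by auto
  next
    case True
    define d where "d = dist z c"
    have d: "R < d" using True by (auto simp: d_def dist_commute)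
    have d0: "0 < d" using d R by simp
    define L where "L = log 2 (d / R)"
    have L0: "L \<ge> 0" using d R unfolding L_def by simp
    define J where "J = nat \<lfloor>L\<rfloor>"
    have J1: "real J \<le> L" "L < real J + 1" using L0 unfolding J_def by linarith+
    have "2 powr real J \<le> d / R" using J1(1) d R unfolding L_def
      using le_log_iff[of 2 "d/R" "real J"] by simp
    hence dJ2: "R * 2 powr real J \<le> d" using R by (simp add: field_simps)
    have "d / R < 2 powr (real J + 1)" using J1(2) d R unfolding L_def
      using log_less_iff[of 2 "d/R" "real J + 1"] by simp
    hence dJ: "d \<le> \<rho> J" using R unfolding \<rho>_def
      by (simp add: field_simps)
    have "d powr e \<le> w J" unfolding w_def
      by (rule powr_mono2') (use ne dJ2 R in auto)
    hence "ennreal (indicator (- cball c R) z * dist z c powr e) \<le> ennreal (w J) * indicator (cball c (\<rho> J)) z"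
      using True dJ by (auto simp: d_def dist_commute intro: ennreal_leI)
    also have "\<dots> \<le> (\<Sum>j. ennreal (w j) * indicator (cball c (\<rho> j)) z)"
      using ennreal_suminf_lessD linorder_not_less by blast
    finally show ?thesis .
  qed
  have "(\<integral>\<^sup>+z. ennreal (indicator (- cball c R) z * dist z c powr e) \<partial>lborel)
      \<le> (\<integral>\<^sup>+z. (\<Sum>j. ennreal (w j) * indicator (cball c (\<rho> j)) z) \<partial>lborel)"
    by (rule nn_integral_mono) (rule pw)
  also have "\<dots> = (\<Sum>j. \<integral>\<^sup>+z. ennreal (w j) * indicator (cball c (\<rho> j)) z \<partial>lborel)"
    by (rule nn_integral_suminf) (measurable, auto simp: pred_def)
  also have "\<dots> = (\<Sum>j. ennreal (w j * (V * \<rho> j ^ DIM('a))))"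
    using rho by (simp add: nn_integral_cmult_indicator emeasure_cball V_def less_imp_le ennreal_mult w_def)
  also have "\<dots> = (\<Sum>j. ennreal (K * q ^ j))"
  proof -
    have "w j * (V * \<rho> j ^ DIM('a)) = K * q ^ j" for j
    proof -
      have "\<rho> j ^ DIM('a) = \<rho> j powr N" using rho by (simp add: N_def powr_realpow)
      also have "\<dots> = R powr N * 2 powr ((real j + 1) * N)" using R
        by (simp add: \<rho>_def powr_mult powr_powr)
      finally have a: "\<rho> j ^ DIM('a) = R powr N * 2 powr ((real j + 1) * N)" .
      have b: "w j = R powr e * 2 powr (real j * e)" using R
        by (simp add: w_def powr_mult powr_powr)
      have c: "q ^ j = 2 powr (real j * (N + e))" unfolding q_def
        by (simp add: powr_realpow[symmetric] powr_powr mult.commute algebra_simps)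
      show ?thesis unfolding a b c K_def
        by (simp add: powr_add algebra_simps)
    qed
    then show ?thesis by simp
  qed
  also have "\<dots> = ennreal (K / (1 - q))"
    apply (rule suminf_ennreal_eq)
    using q V R apply (simp add: K_def)
    using sums_mult[OF geometric_sums[of q], of K] q by simp
  finally show ?thesis by (simp add: K_def V_def N_def q_def)
qed


definition C1 :: "real \<Rightarrow> real \<Rightarrow> real" where
  "C1 N e = unit_ball_vol N * 2 powr (-e) / (1 - 2 powr (-(N + e)))"
definition C2 :: "real \<Rightarrow> real \<Rightarrow> real" where
  "C2 N e = unit_ball_vol N * 2 powr N / (1 - 2 powr (N + e))"

lemma C1_nonneg: "0 < N + e \<Longrightarrow> 0 \<le> N \<Longrightarrow> 0 \<le> C1 N e"
  unfolding C1_def by (auto intro!: divide_nonneg_pos powr_less_one simp: less_imp_le)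
lemma C2_nonneg: "N + e < 0 \<Longrightarrow> 0 \<le> N \<Longrightarrow> 0 \<le> C2 N e"
  unfolding C2_def by (auto intro!: divide_nonneg_pos powr_less_one simp: less_imp_le)

lemma L1':
  fixes c :: "'a::euclidean_space" and R e :: real
  assumes "R > 0" "e < 0" "real DIM('a) + e > 0"
  shows "(\<integral>\<^sup>+z. ennreal (indicator (cball c R) z * dist z c powr e) \<partial>lborel)
     \<le> ennreal (C1 DIM('a) e * R powr (real DIM('a) + e))"
  using L1[OF assms, of c] unfolding C1_def by (simp add: field_simps)

lemma L2':
  fixes c :: "'a::euclidean_space" and R e :: real
  assumes "R > 0" "real DIM('a) + e < 0"
  shows "(\<integral>\<^sup>+z. ennreal (indicator (- cball c R) z * dist z c powr e) \<partial>lborel)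
     \<le> ennreal (C2 DIM('a) e * R powr (real DIM('a) + e))"
  using L2[OF assms, of c] unfolding C2_def by (simp add: field_simps)

lemma L3:
  fixes p q :: "'a::euclidean_space" and a b :: real
  assumes a: "a > 0" and b: "b > 0" and ab: "a + b < real DIM('a)" and pq: "p \<noteq> q"
  shows "(\<integral>\<^sup>+z. ennreal (dist p z powr (a - DIM('a)) * dist z q powr (b - DIM('a))) \<partial>lborel)
     \<le> ennreal ((C1 DIM('a) (b - DIM('a)) + C1 DIM('a) (a - DIM('a))
          + 3 powr (DIM('a) - a) * C2 DIM('a) (a + b - 2 * DIM('a))) * 2 powr (DIM('a) - a - b)
          * dist p q powr (a + b - DIM('a)))"
proof -
  define N where "N = real DIM('a)"
  define r where "r = dist p q"
  define h where "h = r / 2"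
  have r: "r > 0" using pq by (simp add: r_def)
  have h: "h > 0" using r by (simp add: h_def)
  define g1 where "g1 z = h powr (a - N) * (indicator (cball q h) z * dist z q powr (b - N))" for z
  define g2 where "g2 z = h powr (b - N) * (indicator (cball p h) z * dist z p powr (a - N))" for z
  define g3 where "g3 z = 3 powr (N - a) * (indicator (- cball q h) z * dist z q powr (a + b - 2 * N))" for z
  have pw: "ennreal (dist p z powr (a - N) * dist z q powr (b - N)) \<le> ennreal (g1 z) + ennreal (g2 z) + ennreal (g3 z)" for z
  proof -
    have nn: "g1 z \<ge> 0" "g2 z \<ge> 0" "g3 z \<ge> 0" unfolding g1_def g2_def g3_def by auto
    have tri: "r \<le> dist p z + dist z q" unfolding r_def by (rule dist_triangle)
    have "dist p z powr (a - N) * dist z q powr (b - N) \<le> g1 z + g2 z + g3 z"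
    proof (cases "dist z q \<le> h")
      case True
      hence "dist p z \<ge> h" using tri unfolding h_def by linarith
      hence "dist p z powr (a - N) \<le> h powr (a - N)"
        by (intro powr_mono2') (use h ab a b in \<open>auto simp: N_def\<close>)
      hence "dist p z powr (a - N) * dist z q powr (b - N) \<le> g1 z"
        unfolding g1_def using True by (subst indicator_simps(1)) (auto simp: dist_commute intro: mult_right_mono)
      thus ?thesis using nn by linarith
    next
      case F1: False
      show ?thesis
      proof (cases "dist z p \<le> h")
        case True
        hence "dist z q \<ge> h" using tri unfolding h_def by (simp add: dist_commute)
        hence "dist z q powr (b - N) \<le> h powr (b - N)"
          by (intro powr_mono2') (use h ab a b in \<open>auto simp: N_def\<close>)
        hence "dist z q powr (b - N) * dist p z powr (a - N) \<le> g2 z"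
          unfolding g2_def using True by (subst indicator_simps(1)) (auto simp: dist_commute intro: mult_right_mono)
        thus ?thesis using nn by (simp add: mult.commute)
      next
        case False
        have d1: "dist z q > h" using F1 by simp
        have "dist z q \<le> dist z p + r" unfolding r_def by (metis dist_triangle)
        also have "r = 2 * h" unfolding h_def by simp
        finally have "dist z q \<le> 3 * dist p z" using False by (simp add: dist_commute)
        hence "dist z q / 3 \<le> dist p z" by simp
        hence "dist p z powr (a - N) \<le> (dist z q / 3) powr (a - N)"
          by (intro powr_mono2') (use d1 h ab b in \<open>auto simp: N_def\<close>)
        also have "\<dots> = 3 powr (N - a) * dist z q powr (a - N)"
        proof -
          have "3 powr (N - a) * 3 powr (a - N) = 1" by (simp add: powr_add[symmetric])
          moreover have "3 powr (a - N) > 0" by simp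
          moreover have "3 powr (a - N) * (dist z q / 3) powr (a - N) = dist z q powr (a - N)"
            using d1 h powr_divide[of "dist z q" 3 "a - N"] by (simp add: field_simps)
          ultimately show ?thesis by (metis mult.assoc mult_1)
        qed
        finally have "dist p z powr (a - N) * dist z q powr (b - N) \<le> 3 powr (N - a) * dist z q powr (a - N) * dist z q powr (b - N)"
          by (intro mult_right_mono) auto
        also have "\<dots> = g3 z" unfolding g3_def using d1 h
          by (subst indicator_simps(1)) (auto simp: dist_commute powr_add[symmetric] algebra_simps)
        finally show ?thesis using nn by linarith
      qed
    qed
    hence "ennreal (dist p z powr (a - N) * dist z q powr (b - N)) \<le> ennreal (g1 z + g2 z + g3 z)"
      by (rule ennreal_leI)
    also have "ennreal (g1 z + g2 z + g3 z) = ennreal (g1 z) + ennreal (g2 z) + ennreal (g3 z)"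
      using nn by (simp add: ennreal_plus)
    finally show ?thesis .
  qed
  have [measurable]: "cball x t \<in> sets borel" for x :: 'a and t by simp
  have [measurable]: "- cball x t \<in> sets borel" for x :: 'a and t by auto
  have m1: "(\<lambda>z. ennreal (g1 z)) \<in> borel_measurable lborel" unfolding g1_def by measurable
  have m2: "(\<lambda>z. ennreal (g2 z)) \<in> borel_measurable lborel" unfolding g2_def by measurable
  have m3: "(\<lambda>z. ennreal (g3 z)) \<in> borel_measurable lborel" unfolding g3_def by measurable
  have c1: "0 \<le> C1 N (b - N)" "0 \<le> C1 N (a - N)" using a b unfolding N_def by (auto intro!: C1_nonneg)
  have c2: "0 \<le> C2 N (a + b - 2 * N)" using ab unfolding N_def by (auto intro!: C2_nonneg)
  have i1: "(\<integral>\<^sup>+z. ennreal (g1 z) \<partial>lborel) \<le> ennreal (h powr (a - N) * (C1 N (b - N) * h powr b))"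
  proof -
    have "(\<integral>\<^sup>+z. ennreal (g1 z) \<partial>lborel) = ennreal (h powr (a - N)) * (\<integral>\<^sup>+z. ennreal (indicator (cball q h) z * dist z q powr (b - N)) \<partial>lborel)"
      unfolding g1_def by (subst ennreal_mult) (auto intro!: nn_integral_cmult)
    also have "\<dots> \<le> ennreal (h powr (a - N)) * ennreal (C1 N (b - N) * h powr b)"
      using L1'[of h "b - N" q] h ab a b unfolding N_def by (intro mult_left_mono) auto
    finally show ?thesis by (subst ennreal_mult) (use c1 c2 h in auto)
  qed
  have i2: "(\<integral>\<^sup>+z. ennreal (g2 z) \<partial>lborel) \<le> ennreal (h powr (b - N) * (C1 N (a - N) * h powr a))"
  proof -
    have "(\<integral>\<^sup>+z. ennreal (g2 z) \<partial>lborel) = ennreal (h powr (b - N)) * (\<integral>\<^sup>+z. ennreal (indicator (cball p h) z * dist z p powr (a - N)) \<partial>lborel)"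
      unfolding g2_def by (subst ennreal_mult) (auto intro!: nn_integral_cmult)
    also have "\<dots> \<le> ennreal (h powr (b - N)) * ennreal (C1 N (a - N) * h powr a)"
      using L1'[of h "a - N" p] h ab a b unfolding N_def by (intro mult_left_mono) auto
    finally show ?thesis by (subst ennreal_mult) (use c1 c2 h in auto)
  qed
  have i3: "(\<integral>\<^sup>+z. ennreal (g3 z) \<partial>lborel) \<le> ennreal (3 powr (N - a) * (C2 N (a + b - 2 * N) * h powr (a + b - N)))"
  proof -
    have "(\<integral>\<^sup>+z. ennreal (g3 z) \<partial>lborel) = ennreal (3 powr (N - a)) * (\<integral>\<^sup>+z. ennreal (indicator (- cball q h) z * dist z q powr (a + b - 2 * N)) \<partial>lborel)"
      unfolding g3_def by (subst ennreal_mult) (auto intro!: nn_integral_cmult)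
    also have "\<dots> \<le> ennreal (3 powr (N - a)) * ennreal (C2 N (a + b - 2 * N) * h powr (a + b - N))"
      using L2'[of h "a + b - 2 * N" q] h ab a b unfolding N_def by (intro mult_left_mono) auto
    finally show ?thesis by (subst ennreal_mult) (use c1 c2 h in auto)
  qed
  have "(\<integral>\<^sup>+z. ennreal (dist p z powr (a - DIM('a)) * dist z q powr (b - DIM('a))) \<partial>lborel)
      \<le> (\<integral>\<^sup>+z. ennreal (g1 z) + ennreal (g2 z) + ennreal (g3 z) \<partial>lborel)"
    by (rule nn_integral_mono) (use pw in \<open>simp add: N_def\<close>)
  also have "\<dots> = (\<integral>\<^sup>+z. ennreal (g1 z) \<partial>lborel) + (\<integral>\<^sup>+z. ennreal (g2 z) \<partial>lborel) + (\<integral>\<^sup>+z. ennreal (g3 z) \<partial>lborel)"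
    using m1 m2 m3 by (simp add: nn_integral_add)
  also have "\<dots> \<le> ennreal (h powr (a - N) * (C1 N (b - N) * h powr b)) + ennreal (h powr (b - N) * (C1 N (a - N) * h powr a))
      + ennreal (3 powr (N - a) * (C2 N (a + b - 2 * N) * h powr (a + b - N)))"
    using i1 i2 i3 by (intro add_mono)
  also have "\<dots> = ennreal ((C1 N (b - N) + C1 N (a - N) + 3 powr (N - a) * C2 N (a + b - 2 * N)) * h powr (a + b - N))"
  proof -
    have e1: "h powr (a - N) * h powr b = h powr (a + b - N)" "h powr (b - N) * h powr a = h powr (a + b - N)"
      by (simp_all add: powr_add[symmetric] algebra_simps)
    have f1: "h powr (a - N) * (C1 N (b - N) * h powr b) = C1 N (b - N) * h powr (a + b - N)"
      using e1(1) by (metis mult.assoc mult.commute)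
    have f2: "h powr (b - N) * (C1 N (a - N) * h powr a) = C1 N (a - N) * h powr (a + b - N)"
      using e1(2) by (metis mult.assoc mult.commute)
    show ?thesis unfolding f1 f2 using c1 c2 h
      by (simp add: ennreal_plus[symmetric] algebra_simps del: ennreal_plus)
  qed
  also have "h powr (a + b - N) = 2 powr (N - a - b) * r powr (a + b - N)"
  proof -
    have "h powr (a + b - N) = r powr (a + b - N) / 2 powr (a + b - N)" unfolding h_def
      using r by (simp add: powr_divide)
    also have "1 / 2 powr (a + b - N) = 2 powr (N - a - b)"
      by (simp add: powr_minus_divide[symmetric] diff_diff_eq)
    then have "r powr (a + b - N) / 2 powr (a + b - N) = 2 powr (N - a - b) * r powr (a + b - N)"
      by (metis times_divide_eq_left mult.commute mult_1 divide_inverse inverse_eq_divide)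
    finally show ?thesis .
  qed
  finally show ?thesis unfolding N_def r_def by (simp add: algebra_simps)
qed


lemma dist_refl_ge:
  fixes x z :: "real^'n"
  assumes "x $ k > 0" "z $ k > 0"
  shows "dist x z \<le> dist (refl_pt k x) z"
  unfolding dist_vec_def
proof (rule L2_set_mono)
  fix i
  show "dist (x $ i) (z $ i) \<le> dist (refl_pt k x $ i) (z $ i)"
    using assms by (cases "i = k") (auto simp: refl_pt_def dist_real_def)
qed simp

lemma G2m_bounds:
  fixes x z :: "real^'n"
  assumes x: "x \<in> half_space k" and z: "z \<in> half_space k" and xz: "x \<noteq> z"
    and m: "m \<ge> 1" and mn: "2 * m < CARD('n)"
  shows "0 \<le> G2m_half k m x z"
    "G2m_half k m x z \<le> c_const (real CARD('n)) m * dist x z powr (2 * real m - real CARD('n))"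
proof -
  have c: "c_const (real CARD('n)) m > 0" unfolding c_const_def using m mn
    by (intro divide_pos_pos mult_pos_pos Gamma_real_pos) auto
  have d: "0 < dist x z" using xz by simp
  have "dist x z \<le> dist (refl_pt k x) z" using x z by (intro dist_refl_ge) (auto simp: half_space_def)
  hence le: "dist (refl_pt k x) z powr (2 * real m - real CARD('n)) \<le> dist x z powr (2 * real m - real CARD('n))"
    using d mn by (intro powr_mono2') auto
  show "0 \<le> G2m_half k m x z" unfolding G2m_half_def using c le by simp
  show "G2m_half k m x z \<le> c_const (real CARD('n)) m * dist x z powr (2 * real m - real CARD('n))"
    unfolding G2m_half_def using c by (intro mult_left_mono) auto
qed

lemma Galpha_le:
  fixes z y :: "real^'n"
  assumes z: "z \<in> half_space k" and y: "y \<in> half_space k" and zy: "z \<noteq> y"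
    and a0: "0 < \<alpha>" and a2: "\<alpha> < 2" and an: "\<alpha> < real CARD('n)"
  shows "Galpha_half k \<alpha> z y \<le> A_const (real CARD('n)) \<alpha> * dist z y powr (\<alpha> - real CARD('n))"
proof -
  define n where "n = real CARD('n)"
  define s where "s = (dist z y)\<^sup>2"
  define \<tau> where "\<tau> = 4 * (z $ k) * (y $ k)"
  define I where "I = (LBINT b=0..s/\<tau>. (s - \<tau> * b) powr ((n - 2) / 2) / (b powr (\<alpha>/2) * (1 + b)))"
  define P where "P = A_const n \<alpha> / s powr ((n - \<alpha>) / 2)"
  have d: "dist z y > 0" using zy by simp
  have tau: "\<tau> > 0" using z y by (simp add: \<tau>_def half_space_def)
  have s: "s > 0" using d by (simp add: s_def)
  have A: "A_const n \<alpha> > 0" unfolding A_const_def n_def using an a0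
    by (intro divide_pos_pos mult_pos_pos Gamma_real_pos) auto
  have P: "P \<ge> 0" using A by (simp add: P_def)
  have B: "B_const n \<alpha> \<ge> 0" unfolding B_const_def using a0 a2
    by (intro divide_nonneg_pos less_imp_le sin_gt_zero) auto
  have I: "I \<ge> 0"
    unfolding I_def interval_lebesgue_integral_def set_lebesgue_integral_def using s tau
    by (auto intro!: integral_nonneg_AE AE_I2 divide_nonneg_pos mult_pos_pos simp: einterval_def indicator_def)
  have T: "B_const n \<alpha> / (s + \<tau>) powr ((n - 2) / 2) * I \<ge> 0" using B I by simp
  have "Galpha_half k \<alpha> z y = P * (1 - B_const n \<alpha> / (s + \<tau>) powr ((n - 2) / 2) * I)"
    unfolding Galpha_half_def Let_def P_def I_def s_def \<tau>_def n_def by simp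
  also have "\<dots> \<le> P" using P T by (simp add: mult_left_le)
  also have "P = A_const n \<alpha> * dist z y powr (\<alpha> - n)"
  proof -
    have "s powr ((n - \<alpha>) / 2) = dist z y powr (n - \<alpha>)"
    proof -
      have "(dist z y)\<^sup>2 = dist z y powr 2" using d by simp
      moreover have "2 * ((n - \<alpha>) / 2) = n - \<alpha>" by simp
      ultimately show ?thesis unfolding s_def by (simp only: powr_powr)
    qed
    moreover have "dist z y powr (\<alpha> - n) = inverse (dist z y powr (n - \<alpha>))"
      using powr_minus[of "dist z y" "n - \<alpha>"] by simp
    ultimately show ?thesis unfolding P_def divide_inverse by (simp only:)
  qed
  finally show ?thesis by (simp add: n_def)
qed



theorem lemma2p1:
  fixes k :: "'n::finite" and m :: nat and \<alpha> :: real
  assumes "CARD('n) \<ge> 2" and "m \<ge> 1" and "2 * m < CARD('n)"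
    and "0 < \<alpha>" and "\<alpha> < 2"
    and "real m + \<alpha> / 2 < real CARD('n) / 2"
  shows "\<exists>C>0. \<forall>x\<in>half_space k. \<forall>y\<in>half_space k. x \<noteq> y \<longrightarrow>
           G2t_half k m \<alpha> x y \<le> C / dist x y powr (real CARD('n) - 2 * (real m + \<alpha> / 2))"
proof -
  note asm = assms
  have dim: "DIM(real^'n) = CARD('n)" by simp
  define N where "N = real CARD('n)"
  define K3 where "K3 = (C1 N (\<alpha> - N) + C1 N (2 * real m - N) + 3 powr (N - 2 * real m) * C2 N (2 * real m + \<alpha> - 2 * N)) * 2 powr (N - 2 * real m - \<alpha>)"
  define cA where "cA = c_const N m * A_const N \<alpha>"
  have an: "\<alpha> < N" using asm unfolding N_def by linarith
  have abN: "2 * real m + \<alpha> < N" using asm unfolding N_def by linarith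
  have cpos: "c_const N m > 0" unfolding c_const_def N_def using asm
    by (intro divide_pos_pos mult_pos_pos Gamma_real_pos) auto
  have Apos: "A_const N \<alpha> > 0" unfolding A_const_def using an asm
    by (intro divide_pos_pos mult_pos_pos Gamma_real_pos) auto
  have cA: "cA \<ge> 0" using cpos Apos by (simp add: cA_def)
  have K3: "K3 \<ge> 0" unfolding K3_def using asm an abN
    by (intro mult_nonneg_nonneg add_nonneg_nonneg C1_nonneg C2_nonneg) (auto simp: N_def)
  define C where "C = cA * K3 + 1"
  have C: "C > 0" unfolding C_def using mult_nonneg_nonneg[OF cA K3] by linarith
  show ?thesis
  proof (intro exI[of _ C] conjI ballI impI C)
    fix x y :: "real^'n"
    assume x: "x \<in> half_space k" and y: "y \<in> half_space k" and xy: "x \<noteq> y"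
    define r where "r = dist x y"
    have r: "r > 0" using xy by (simp add: r_def)
    define g where "g z = dist x z powr (2 * real m - N) * dist z y powr (\<alpha> - N)" for z
    have pw: "ennreal (indicator (half_space k) z *\<^sub>R (G2m_half k m x z * Galpha_half k \<alpha> z y))
        \<le> ennreal (cA * g z)" if zx: "z \<noteq> x" and zy: "z \<noteq> y" for z
    proof (cases "z \<in> half_space k")
      case False then show ?thesis by simp
    next
      case True
      have G1: "0 \<le> G2m_half k m x z" "G2m_half k m x z \<le> c_const N m * dist x z powr (2 * real m - N)"
        using G2m_bounds[OF x True] zx asm by (auto simp: N_def)
      have G2: "Galpha_half k \<alpha> z y \<le> A_const N \<alpha> * dist z y powr (\<alpha> - N)"
        using Galpha_le[OF True y zy] asm an by (simp add: N_def)
      have "G2m_half k m x z * Galpha_half k \<alpha> z y \<le> G2m_half k m x z * (A_const N \<alpha> * dist z y powr (\<alpha> - N))"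
        using G1(1) G2 by (rule mult_left_mono[rotated])
      also have "\<dots> \<le> (c_const N m * dist x z powr (2 * real m - N)) * (A_const N \<alpha> * dist z y powr (\<alpha> - N))"
        using G1(2) Apos by (intro mult_right_mono) auto
      also have "\<dots> = cA * g z" by (simp add: cA_def g_def algebra_simps)
      finally show ?thesis using True by (intro ennreal_leI) simp
    qed
    have mg: "(\<lambda>z. ennreal (g z)) \<in> borel_measurable lborel" unfolding g_def by measurable
    have L3i: "(\<integral>\<^sup>+z. ennreal (g z) \<partial>lborel) \<le> ennreal (K3 * r powr (2 * real m + \<alpha> - N))"
      using L3[of "2 * real m" \<alpha> x y] asm abN xy
      unfolding g_def K3_def r_def N_def dim by (simp add: algebra_simps)
    have "(\<integral>\<^sup>+z. ennreal (indicator (half_space k) z *\<^sub>R (G2m_half k m x z * Galpha_half k \<alpha> z y)) \<partial>lborel)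
        \<le> (\<integral>\<^sup>+z. ennreal (cA * g z) \<partial>lborel)"
    proof (rule nn_integral_mono_AE)
      show "AE z in lborel. ennreal (indicator (half_space k) z *\<^sub>R (G2m_half k m x z * Galpha_half k \<alpha> z y)) \<le> ennreal (cA * g z)"
        using AE_lborel_singleton[of x] AE_lborel_singleton[of y]
      proof eventually_elim
        case (elim z)
        then show ?case by (intro pw) auto
      qed
    qed
    also have "\<dots> = ennreal cA * (\<integral>\<^sup>+z. ennreal (g z) \<partial>lborel)"
      using cA by (subst ennreal_mult) (auto simp: g_def intro!: nn_integral_cmult mg)
    also have "\<dots> \<le> ennreal cA * ennreal (K3 * r powr (2 * real m + \<alpha> - N))"
      by (intro mult_left_mono L3i) auto
    also have "\<dots> = ennreal (cA * K3 * r powr (2 * real m + \<alpha> - N))"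
      by (subst ennreal_mult[symmetric]) (use cA K3 in \<open>auto simp: mult.assoc\<close>)
    finally have bound: "G2t_half k m \<alpha> x y \<le> cA * K3 * r powr (2 * real m + \<alpha> - N)"
      unfolding G2t_half_def set_lebesgue_integral_def
      by (intro integral_real_bounded) (use cA K3 in auto)
    also have "\<dots> \<le> C * r powr (2 * real m + \<alpha> - N)"
      unfolding C_def by (intro mult_right_mono) auto
    also have "\<dots> = C / r powr (N - 2 * (real m + \<alpha> / 2))"
    proof -
      have e: "2 * real m + \<alpha> - N = - (N - 2 * (real m + \<alpha> / 2))" by (simp add: algebra_simps)
      have "r powr (2 * real m + \<alpha> - N) = inverse (r powr (N - 2 * (real m + \<alpha> / 2)))"
        by (simp only: e powr_minus)
      thus ?thesis by (simp only: divide_inverse)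
    qed
    finally show "G2t_half k m \<alpha> x y \<le> C / dist x y powr (real CARD('n) - 2 * (real m + \<alpha> / 2))"
      by (simp add: r_def N_def)
  qed
qed

end
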